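(* Let $\phi(w)=aw+b$ with $a\in(0,1)$ and $b\in\mathbb{C}$, $\mathrm{Re}(b)\geq 0$ (so $\phi$ is a self-map of $\mathbb{C}_{+}$). Then the composition operator $C_{\phi}f=f\circ\phi$ is positively expansive on $H^2(\mathbb{C}_{+})$, i.e. for every $f\in H^2(\mathbb{C}_{+})$ with $\|f\|_2=1$ there exists $n\in\mathbb{N}$ such that $\|C_{\phi}^{n}f\|_2\geq 2$.
   Context: $\mathbb{C}_{+}=\{w\in\mathbb{C}:\mathrm{Re}(w)>0\}$ is the open right half-plane. $H^2(\mathbb{C}_{+})$ is the Hardy space of holomorphic functions $f$ on $\mathbb{C}_{+}$ with finite norm $\|f\|_2^2=\sup_{0<x<\infty}\frac{1}{\pi}\int_{-\infty}^{\infty}|f(x+iy)|^2\,dy$; it is a Hilbert space. For affine $\phi(w)=aw+b$ with $a>0$, $\mathrm{Re}(b)\ge 0$, the composition operator $C_\phi f=f\circ\phi$ is a bounded operator on $H^2(\mathbb{C}_{+})$. Such $\phi$ with $a\in(0,1)$ is called hyperbolic of type I. *)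

theory Defs
  imports "HOL-Analysis.Analysis"
begin

definition rhp :: "complex set" where
  "rhp = {w. Re w > 0}"

definition H2_norm_sq :: "(complex \<Rightarrow> complex) \<Rightarrow> ennreal" where
  "H2_norm_sq f = (SUP x\<in>{0<..}. ennreal (1 / pi) *
      (\<integral>\<^sup>+ y. ennreal ((cmod (f (Complex x y)))\<^sup>2) \<partial>lborel))"

definition H2 :: "(complex \<Rightarrow> complex) set" where
  "H2 = {f. f holomorphic_on rhp \<and> H2_norm_sq f < \<infinity>}"

definition H2_norm :: "(complex \<Rightarrow> complex) \<Rightarrow> real" where
  "H2_norm f = sqrt (enn2real (H2_norm_sq f))"

definition comp_op :: "(complex \<Rightarrow> complex) \<Rightarrow> (complex \<Rightarrow> complex) \<Rightarrow> (complex \<Rightarrow> complex)" where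
  "comp_op \<phi> f = f \<circ> \<phi>"

end

theory Submission imports Defs "HOL-Complex_Analysis.Complex_Analysis" begin

lemma cont_line:
  assumes "f holomorphic_on rhp" "X > 0"
  shows "continuous_on UNIV (\<lambda>t. f (Complex X t))"
proof -
  have c1: "continuous_on UNIV (\<lambda>t::real. Complex X t)"
    unfolding Complex_eq by (intro continuous_intros)
  have c2: "continuous_on rhp f"
    using assms(1) holomorphic_on_imp_continuous_on by blast
  show ?thesis
    by (rule continuous_on_compose2[OF c2 c1]) (use assms(2) in \<open>auto simp: rhp_def\<close>)
qed

lemma meas_line:
  assumes "f holomorphic_on rhp" "X > 0"
  shows "(\<lambda>t. ennreal ((cmod (f (Complex X t)))\<^sup>2)) \<in> borel_measurable borel"
proof -
  have "continuous_on UNIV (\<lambda>t. (cmod (f (Complex X t)))\<^sup>2)"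
    using cont_line[OF assms] by (intro continuous_intros)
  then have "(\<lambda>t. (cmod (f (Complex X t)))\<^sup>2) \<in> borel_measurable borel"
    by (rule borel_measurable_continuous_onI)
  then show ?thesis by measurable
qed

lemma affine_line:
  assumes "f holomorphic_on rhp" "x > 0" "\<alpha> > 0" "Re \<beta> \<ge> 0"
  shows "(\<integral>\<^sup>+ y. ennreal ((cmod (f (of_real \<alpha> * Complex x y + \<beta>)))\<^sup>2) \<partial>lborel)
       = ennreal (1/\<alpha>) * (\<integral>\<^sup>+ t. ennreal ((cmod (f (Complex (\<alpha>*x + Re \<beta>) t)))\<^sup>2) \<partial>lborel)"
proof -
  define g where "g = (\<lambda>t. ennreal ((cmod (f (Complex (\<alpha>*x + Re \<beta>) t)))\<^sup>2))"
  have X: "\<alpha>*x + Re \<beta> > 0" using assms by (simp add: add_pos_nonneg)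
  have gm: "g \<in> borel_measurable borel" unfolding g_def by (rule meas_line[OF assms(1) X])
  have eq: "\<And>y. of_real \<alpha> * Complex x y + \<beta> = Complex (\<alpha>*x + Re \<beta>) (Im \<beta> + \<alpha> * y)"
    by (simp add: complex_eq_iff)
  have "(\<integral>\<^sup>+ t. g t \<partial>lborel) = \<bar>\<alpha>\<bar> * (\<integral>\<^sup>+ y. g (Im \<beta> + \<alpha> * y) \<partial>lborel)"
    by (rule nn_integral_real_affine[OF gm]) (use assms in auto)
  then have "ennreal (1/\<alpha>) * (\<integral>\<^sup>+ t. g t \<partial>lborel) = (\<integral>\<^sup>+ y. g (Im \<beta> + \<alpha> * y) \<partial>lborel)"
    using assms(3) by (simp add: mult.assoc[symmetric] ennreal_mult'[symmetric])
  then show ?thesis unfolding g_def eq by simp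
qed

lemma pos_integral:
  fixes g :: "real \<Rightarrow> real"
  assumes "continuous_on UNIV g" "\<And>t. g t \<ge> 0" "g t0 > 0"
  shows "(\<integral>\<^sup>+ t. ennreal (g t) \<partial>lborel) > 0"
proof -
  have "isCont g t0" using assms(1) by (simp add: continuous_on_eq_continuous_at)
  then obtain d where d: "d > 0" "\<And>t. dist t t0 < d \<Longrightarrow> dist (g t) (g t0) < g t0 / 2"
    using assms(3) unfolding continuous_at_eps_delta by (metis half_gt_zero)
  have "\<And>t. ennreal (g t0 / 2) * indicator {t0 - d/2..t0 + d/2} t \<le> ennreal (g t)"
  proof -
    fix t show "ennreal (g t0 / 2) * indicator {t0 - d/2..t0 + d/2} t \<le> ennreal (g t)"
    proof (cases "t \<in> {t0 - d/2..t0 + d/2}")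
      case True
      then have "dist t t0 < d" using d(1) by (auto simp: dist_real_def)
      then have "dist (g t) (g t0) < g t0 / 2" using d(2) by blast
      then have "g t0 / 2 \<le> g t" by (auto simp: dist_real_def abs_if split: if_splits)
      then show ?thesis using True by (simp add: ennreal_leI)
    qed simp
  qed
  then have "(\<integral>\<^sup>+ t. ennreal (g t0 / 2) * indicator {t0 - d/2..t0 + d/2} t \<partial>lborel) \<le> (\<integral>\<^sup>+ t. ennreal (g t) \<partial>lborel)"
    by (intro nn_integral_mono) auto
  moreover have "(\<integral>\<^sup>+ t. ennreal (g t0 / 2) * indicator {t0 - d/2..t0 + d/2} t \<partial>lborel) = ennreal (g t0 / 2) * ennreal d"
    using d(1) by (subst nn_integral_cmult_indicator) auto
  moreover have "ennreal (g t0 / 2) * ennreal d > 0" using d(1) assms(3)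
    by (simp add: ennreal_mult'[symmetric])
  ultimately show ?thesis by (metis order_less_le_trans)
qed

lemma iter_form:
  assumes "\<phi> = (\<lambda>w. of_real a * w + b)" "a \<noteq> 1"
  shows "\<exists>\<beta>. (comp_op \<phi> ^^ n) f = f \<circ> (\<lambda>w. of_real (a^n) * w + \<beta>) \<and> Re \<beta> = Re b * (1 - a^n) / (1 - a)"
proof (induction n)
  case 0
  then show ?case by (auto simp: o_def fun_eq_iff intro!: exI[of _ 0])
next
  case (Suc n)
  then obtain \<beta> where h: "(comp_op \<phi> ^^ n) f = f \<circ> (\<lambda>w. of_real (a^n) * w + \<beta>)" "Re \<beta> = Re b * (1 - a^n) / (1 - a)"
    by blast
  have "(comp_op \<phi> ^^ Suc n) f = f \<circ> (\<lambda>w. of_real (a^Suc n) * w + (of_real (a^n) * b + \<beta>))"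
    using h(1) by (simp add: comp_op_def assms(1) o_def fun_eq_iff algebra_simps)
  moreover have "Re (of_real (a^n) * b + \<beta>) = Re b * (1 - a^Suc n) / (1 - a)"
    using assms(2) by (simp add: h(2)) (simp add: field_simps)
  ultimately show ?case by blast
qed

lemma norm_comp:
  assumes "f holomorphic_on rhp" "\<alpha> > 0" "Re \<beta> \<ge> 0"
  shows "H2_norm_sq (f \<circ> (\<lambda>w. of_real \<alpha> * w + \<beta>)) = (SUP x\<in>{0<..}. ennreal (1/pi) *
      (ennreal (1/\<alpha>) * (\<integral>\<^sup>+ t. ennreal ((cmod (f (Complex (\<alpha>*x + Re \<beta>) t)))\<^sup>2) \<partial>lborel)))"
  unfolding H2_norm_sq_def o_def
  by (intro SUP_cong refl arg_cong2[where f="(*)"] affine_line[OF assms(1) _ assms(2,3)]) auto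

lemma norm_comp_upper:
  assumes "f holomorphic_on rhp" "\<alpha> > 0" "Re \<beta> \<ge> 0"
  shows "H2_norm_sq (f \<circ> (\<lambda>w. of_real \<alpha> * w + \<beta>)) \<le> ennreal (1/\<alpha>) * H2_norm_sq f"
  unfolding norm_comp[OF assms]
proof (rule SUP_least)
  fix x :: real assume "x \<in> {0<..}"
  then have X: "\<alpha>*x + Re \<beta> \<in> {0<..}" using assms by (simp add: add_pos_nonneg)
  have "ennreal (1/pi) * (ennreal (1/\<alpha>) * (\<integral>\<^sup>+ t. ennreal ((cmod (f (Complex (\<alpha>*x + Re \<beta>) t)))\<^sup>2) \<partial>lborel))
     = ennreal (1/\<alpha>) * (ennreal (1/pi) * (\<integral>\<^sup>+ t. ennreal ((cmod (f (Complex (\<alpha>*x + Re \<beta>) t)))\<^sup>2) \<partial>lborel))"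
    by (simp add: ac_simps)
  also have "\<dots> \<le> ennreal (1/\<alpha>) * H2_norm_sq f"
    unfolding H2_norm_sq_def
    by (intro mult_left_mono SUP_upper X) auto
  finally show "ennreal (1/pi) * (ennreal (1/\<alpha>) * (\<integral>\<^sup>+ t. ennreal ((cmod (f (Complex (\<alpha>*x + Re \<beta>) t)))\<^sup>2) \<partial>lborel))
     \<le> ennreal (1/\<alpha>) * H2_norm_sq f" .
qed

lemma norm_comp_lower:
  assumes "f holomorphic_on rhp" "\<alpha> > 0" "Re \<beta> \<ge> 0" "X > Re \<beta>"
  shows "ennreal (1/\<alpha>) * (ennreal (1/pi) * (\<integral>\<^sup>+ t. ennreal ((cmod (f (Complex X t)))\<^sup>2) \<partial>lborel))
     \<le> H2_norm_sq (f \<circ> (\<lambda>w. of_real \<alpha> * w + \<beta>))"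
  unfolding norm_comp[OF assms(1-3)]
proof -
  define x where "x = (X - Re \<beta>) / \<alpha>"
  have x: "x \<in> {0<..}" using assms by (simp add: x_def)
  have e: "\<alpha>*x + Re \<beta> = X" using assms(2) by (simp add: x_def)
  show "ennreal (1/\<alpha>) * (ennreal (1/pi) * (\<integral>\<^sup>+ t. ennreal ((cmod (f (Complex X t)))\<^sup>2) \<partial>lborel))
     \<le> (SUP x\<in>{0<..}. ennreal (1/pi) *
      (ennreal (1/\<alpha>) * (\<integral>\<^sup>+ t. ennreal ((cmod (f (Complex (\<alpha>*x + Re \<beta>) t)))\<^sup>2) \<partial>lborel)))"
    by (rule SUP_upper2[OF x]) (simp only: e, simp add: ac_simps)
qed

lemma exists_line:
  assumes "f holomorphic_on rhp" "H2_norm_sq f \<noteq> 0" "c \<ge> 0"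
  shows "\<exists>X>c. (\<integral>\<^sup>+ t. ennreal ((cmod (f (Complex X t)))\<^sup>2) \<partial>lborel) > 0"
proof (rule ccontr)
  assume "\<not> ?thesis"
  then have z: "\<And>X. X > c \<Longrightarrow> (\<integral>\<^sup>+ t. ennreal ((cmod (f (Complex X t)))\<^sup>2) \<partial>lborel) = 0"
    by (metis not_gr_zero)
  have fz: "f z = 0" if "Re z > c" for z
  proof (rule ccontr)
    assume "f z \<noteq> 0"
    have X: "Re z > 0" using that assms(3) by linarith
    have "(\<integral>\<^sup>+ t. ennreal ((cmod (f (Complex (Re z) t)))\<^sup>2) \<partial>lborel) > 0"
      by (rule pos_integral[of _ "Im z"]) (use cont_line[OF assms(1) X] \<open>f z \<noteq> 0\<close> in \<open>auto intro!: continuous_intros\<close>)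
    with z[OF that] show False by simp
  qed
  have all0: "f z = 0" if "z \<in> rhp" for z
  proof (rule analytic_continuation_open[where f=f and s="{z. Re z > c}" and s'=rhp and g="\<lambda>_. 0"])
    show "open {z. c < Re z}" by (simp add: open_halfspace_Re_gt)
    show "open rhp" unfolding rhp_def by (simp add: open_halfspace_Re_gt)
    show "{z. c < Re z} \<noteq> {}" by (auto intro!: exI[of _ "of_real (c+1)"])
    show "connected rhp" unfolding rhp_def by (intro convex_connected convex_halfspace_Re_gt)
    show "{z. c < Re z} \<subseteq> rhp" using assms(3) by (auto simp: rhp_def)
  qed (use assms(1) fz that in auto)
  have "H2_norm_sq f = 0"
    unfolding H2_norm_sq_def
    by (rule SUP_eq_const) (auto simp: all0 rhp_def)
  with assms(2) show False by simp
qed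

theorem proposition3p1:
  fixes a :: real and b :: complex and \<phi> :: "complex \<Rightarrow> complex"
  assumes "0 < a" and "a < 1" and "Re b \<ge> 0"
    and "\<phi> = (\<lambda>w. of_real a * w + b)"
  shows "\<forall>f\<in>H2. H2_norm f = 1 \<longrightarrow> (\<exists>n::nat. H2_norm ((comp_op \<phi> ^^ n) f) \<ge> 2)"
proof (intro ballI impI)
  fix f assume fH: "f \<in> H2" and n1: "H2_norm f = 1"
  have hol: "f holomorphic_on rhp" and fin: "H2_norm_sq f < \<infinity>" using fH by (auto simp: H2_def)
  have "enn2real (H2_norm_sq f) = 1" using n1 unfolding H2_norm_def
    by (metis real_sqrt_eq_1_iff)
  then have N1: "H2_norm_sq f = 1" using fin
  proof -
    have "H2_norm_sq f = ennreal (enn2real (H2_norm_sq f))" using fin by simp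
    then show ?thesis using \<open>enn2real (H2_norm_sq f) = 1\<close> by simp
  qed
  define c where "c = Re b / (1 - a)"
  have c0: "c \<ge> 0" using assms by (simp add: c_def)
  obtain X where X: "X > c" and Jp: "(\<integral>\<^sup>+ t. ennreal ((cmod (f (Complex X t)))\<^sup>2) \<partial>lborel) > 0"
    using exists_line[OF hol _ c0] N1 by auto
  define J where "J = ennreal (1/pi) * (\<integral>\<^sup>+ t. ennreal ((cmod (f (Complex X t)))\<^sup>2) \<partial>lborel)"
  have J0: "J > 0" using Jp unfolding J_def by (simp add: ennreal_zero_less_mult_iff)
  have J1: "J \<le> 1" unfolding J_def N1[symmetric] H2_norm_sq_def
    by (rule SUP_upper) (use X c0 in auto)
  obtain j where j: "J = ennreal j" "j > 0" "j \<le> 1"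
    using J0 J1 by (cases J) (auto simp: ennreal_less_iff top_unique)
  obtain n where n: "4 / j < (1/a)^n"
    using real_arch_pow[of "1/a" "4/j"] assms by auto
  obtain \<beta> where \<beta>: "(comp_op \<phi> ^^ n) f = f \<circ> (\<lambda>w. of_real (a^n) * w + \<beta>)"
      "Re \<beta> = Re b * (1 - a^n) / (1 - a)"
    using iter_form[OF assms(4)] assms(2) by blast
  have an: "a^n > 0" "a^n \<le> 1" using assms by (auto simp: power_le_one)
  have rb0: "Re \<beta> \<ge> 0" using \<beta>(2) an assms by simp
  have rbc: "Re \<beta> \<le> c" unfolding \<beta>(2) c_def using an assms
    by (intro divide_right_mono) (auto simp: mult_left_le)
  have low: "ennreal (1/a^n) * J \<le> H2_norm_sq ((comp_op \<phi> ^^ n) f)"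
    unfolding \<beta>(1) J_def using norm_comp_lower[OF hol an(1) rb0, of X] X rbc by simp
  have up: "H2_norm_sq ((comp_op \<phi> ^^ n) f) \<le> ennreal (1/a^n)"
    unfolding \<beta>(1) using norm_comp_upper[OF hol an(1) rb0] N1 by simp
  have "ennreal (j / a^n) \<le> H2_norm_sq ((comp_op \<phi> ^^ n) f)"
    using low j an by (simp add: ennreal_mult'[symmetric] )
  then have "j / a^n \<le> enn2real (H2_norm_sq ((comp_op \<phi> ^^ n) f))"
    using up by (metis enn2real_ennreal enn2real_mono ennreal_less_top order.strict_trans1 j(2) an(1) divide_pos_pos less_imp_le)
  moreover have "4 \<le> j / a^n"
    using n j an by (simp add: field_simps power_divide)
  ultimately have "4 \<le> enn2real (H2_norm_sq ((comp_op \<phi> ^^ n) f))" by linarith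
  then have "sqrt 4 \<le> H2_norm ((comp_op \<phi> ^^ n) f)" unfolding H2_norm_def
    using real_sqrt_le_mono by blast
  then show "\<exists>n. 2 \<le> H2_norm ((comp_op \<phi> ^^ n) f)" by (auto simp: real_sqrt_four)
qed

end
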